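(* Let $p\ge1$, $m=2p$, $N\ge0$, and let $\beta(0),\dots,\beta(N)$ be $p\times m$ matrices with $\beta(k)J\beta(k)^*=I_p$. Put $C_k=2K^*\beta(k)^*\beta(k)K-j$, let $W_k$ be the solution of $W_{k+1}(\lambda)-W_k(\lambda)=-\frac{i}{\lambda}jC_kW_k(\lambda)$ with $W_0=I_m$, and $\mathcal W(\lambda)=\{\mathcal W_{ij}(\lambda)\}_{i,j=1}^2=KW_{N+1}(\bar\lambda)^*$ ($p\times p$ blocks). Let $R,Q$ be $p\times p$ matrix functions meromorphic in $\mathbb C_-$, well defined at $\lambda=-i$, with $R(\lambda)^*R(\lambda)+Q(\lambda)^*Q(\lambda)>0$ and $R(\lambda)^*R(\lambda)\le Q(\lambda)^*Q(\lambda)$. Then $\det\big(\mathcal W_{11}(-i)R(-i)+\mathcal W_{12}(-i)Q(-i)\big)\neq0$.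
   Context: $\mathbb C_-$ is the open lower half-plane; $j=\mathrm{diag}(I_p,-I_p)$, $J=\begin{bmatrix}0&I_p\\ I_p&0\end{bmatrix}$, $K=\frac1{\sqrt2}\begin{bmatrix}I_p&-I_p\\ I_p&I_p\end{bmatrix}$. *)

theory Defs
  imports "HOL-Complex_Analysis.Complex_Analysis" "Jordan_Normal_Form.Schur_Decomposition"
begin

definition jmat :: "nat \<Rightarrow> complex mat" where
  "jmat p = four_block_mat (1\<^sub>m p) (0\<^sub>m p p) (0\<^sub>m p p) (- 1\<^sub>m p)"

definition Jmat :: "nat \<Rightarrow> complex mat" where
  "Jmat p = four_block_mat (0\<^sub>m p p) (1\<^sub>m p) (1\<^sub>m p) (0\<^sub>m p p)"

definition Kmat :: "nat \<Rightarrow> complex mat" where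
  "Kmat p = complex_of_real (1 / sqrt 2) \<cdot>\<^sub>m
              four_block_mat (1\<^sub>m p) (- 1\<^sub>m p) (1\<^sub>m p) (1\<^sub>m p)"

definition Cmat :: "nat \<Rightarrow> (nat \<Rightarrow> complex mat) \<Rightarrow> nat \<Rightarrow> complex mat" where
  "Cmat p \<beta> k = 2 \<cdot>\<^sub>m (mat_adjoint (Kmat p) * mat_adjoint (\<beta> k) * \<beta> k * Kmat p) - jmat p"

fun Wmat :: "nat \<Rightarrow> (nat \<Rightarrow> complex mat) \<Rightarrow> nat \<Rightarrow> complex \<Rightarrow> complex mat" where
  "Wmat p \<beta> 0 l = 1\<^sub>m (2 * p)"
| "Wmat p \<beta> (Suc k) l = Wmat p \<beta> k l - (\<i> / l) \<cdot>\<^sub>m (jmat p * Cmat p \<beta> k * Wmat p \<beta> k l)"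

definition calW :: "nat \<Rightarrow> (nat \<Rightarrow> complex mat) \<Rightarrow> nat \<Rightarrow> complex \<Rightarrow> complex mat" where
  "calW p \<beta> N l = Kmat p * mat_adjoint (Wmat p \<beta> (Suc N) (cnj l))"

definition blk11 :: "nat \<Rightarrow> complex mat \<Rightarrow> complex mat" where
  "blk11 p A = (case split_block A p p of (A11, A12, A21, A22) \<Rightarrow> A11)"
definition blk12 :: "nat \<Rightarrow> complex mat \<Rightarrow> complex mat" where
  "blk12 p A = (case split_block A p p of (A11, A12, A21, A22) \<Rightarrow> A12)"

definition posdef :: "complex mat \<Rightarrow> bool" where
  "posdef H \<longleftrightarrow> H \<in> carrier_mat (dim_row H) (dim_row H) \<and> mat_adjoint H = H \<and>
     (\<forall>v \<in> carrier_vec (dim_row H). v \<noteq> 0\<^sub>v (dim_row H) \<longrightarrow> 0 < Re ((H *\<^sub>v v) \<bullet>c v))"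

definition psd :: "complex mat \<Rightarrow> bool" where
  "psd H \<longleftrightarrow> H \<in> carrier_mat (dim_row H) (dim_row H) \<and> mat_adjoint H = H \<and>
     (\<forall>v \<in> carrier_vec (dim_row H). 0 \<le> Re ((H *\<^sub>v v) \<bullet>c v))"

definition lower_half :: "complex set" where
  "lower_half = {z. Im z < 0}"

end

theory Submission
  imports Defs
begin

unbundle no vec_syntax
no_notation fps_nth (infixl \<open>$\<close> 75)


lemma adj_def': "mat_adjoint A = mat (dim_col A) (dim_row A) (\<lambda>(i,j). cnj (A $$ (j,i)))"
  unfolding mat_adjoint_def mat_of_rows_def by (rule eq_matI) (simp_all add: cols_def)

lemma adj_dims[simp]: "dim_row (mat_adjoint (A::complex mat)) = dim_col A" "dim_col (mat_adjoint A) = dim_row A"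
  by (auto simp add: adj_def')

lemma adj_index[simp]: "i < dim_col A \<Longrightarrow> j < dim_row A \<Longrightarrow> mat_adjoint (A::complex mat) $$ (i,j) = cnj (A $$ (j,i))"
  by (simp add: adj_def')

lemma adj_carrier[simp]: "(A::complex mat) \<in> carrier_mat n m \<Longrightarrow> mat_adjoint A \<in> carrier_mat m n"
  by (intro carrier_matI) (auto dest: carrier_matD)

lemma adj_adj[simp]: "mat_adjoint (mat_adjoint (A::complex mat)) = A"
  by (rule eq_matI) auto

lemma adj_mult: assumes "(A::complex mat) \<in> carrier_mat n m" "B \<in> carrier_mat m k"
  shows "mat_adjoint (A * B) = mat_adjoint B * mat_adjoint A"
  using assms by (intro eq_matI) (auto simp: scalar_prod_def cnj_sum mult.commute intro!: sum.cong)

lemma adj_minus: assumes "(A::complex mat) \<in> carrier_mat n m" "B \<in> carrier_mat n m"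
  shows "mat_adjoint (A - B) = mat_adjoint A - mat_adjoint B"
  using assms by (intro eq_matI) auto

lemma adj_smult: "mat_adjoint (c \<cdot>\<^sub>m (A::complex mat)) = cnj c \<cdot>\<^sub>m mat_adjoint A"
  by (intro eq_matI) auto

lemma adj_one[simp]: "mat_adjoint (1\<^sub>m n) = (1\<^sub>m n :: complex mat)"
  by (intro eq_matI) auto

lemma adj_inner: assumes A: "(A::complex mat) \<in> carrier_mat n m" and v: "v \<in> carrier_vec m" and w: "w \<in> carrier_vec n"
  shows "(A *\<^sub>v v) \<bullet>c w = v \<bullet>c (mat_adjoint A *\<^sub>v w)"
proof -
  have "(A *\<^sub>v v) \<bullet>c w = (\<Sum>i<n. \<Sum>k<m. A $$ (i,k) * v $ k * cnj (w $ i))"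
    using assms by (simp add: scalar_prod_def sum_distrib_right atLeast0LessThan)
  also have "\<dots> = (\<Sum>k<m. \<Sum>i<n. A $$ (i,k) * v $ k * cnj (w $ i))"
    by (rule sum.swap)
  also have "\<dots> = v \<bullet>c (mat_adjoint A *\<^sub>v w)"
    using assms by (simp add: scalar_prod_def sum_distrib_left cnj_sum atLeast0LessThan mult_ac)
  finally show ?thesis .
qed

lemma cs_minus_right: assumes "(a::complex vec) \<in> carrier_vec n" "b \<in> carrier_vec n" "c \<in> carrier_vec n"
  shows "c \<bullet>c (a - b) = c \<bullet>c a - c \<bullet>c b"
  using assms by (simp add: scalar_prod_def sum_subtractf right_diff_distrib)

lemma cs_minus_left: assumes "(a::complex vec) \<in> carrier_vec n" "b \<in> carrier_vec n" "c \<in> carrier_vec n"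
  shows "(a - b) \<bullet>c c = a \<bullet>c c - b \<bullet>c c"
  using assms by (simp add: scalar_prod_def sum_subtractf left_diff_distrib)


declare index_mult_mat_vec[simp del]

lemma smult_mat_mv: assumes "(A::complex mat) \<in> carrier_mat n m" "v \<in> carrier_vec m"
  shows "(c \<cdot>\<^sub>m A) *\<^sub>v v = c \<cdot>\<^sub>v (A *\<^sub>v v)"
  using assms by (intro eq_vecI) (simp_all add: index_mult_mat_vec scalar_prod_def sum_distrib_left mult.assoc)

lemma one_smult_mat': "(1::complex) \<cdot>\<^sub>m A = A"
  by (intro eq_matI) simp_all

lemma fb_mv: assumes A: "(A::complex mat) \<in> carrier_mat p p" and B: "B \<in> carrier_mat p p"
  and C: "C \<in> carrier_mat p p" and D: "D \<in> carrier_mat p p"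
  and v: "v \<in> carrier_vec (2*p)" and i: "i < 2*p"
  shows "(four_block_mat A B C D *\<^sub>v v) $ i = (if i < p
     then (A *\<^sub>v vec_first v p) $ i + (B *\<^sub>v vec_last v p) $ i
     else (C *\<^sub>v vec_first v p) $ (i-p) + (D *\<^sub>v vec_last v p) $ (i-p))"
proof -
  have v': "v \<in> carrier_vec (p+p)" using v by (simp add: mult_2)
  have "four_block_mat A B C D *\<^sub>v v = four_block_mat A B C D *\<^sub>v (vec_first v p @\<^sub>v vec_last v p)"
    using vec_first_last_append[OF v'] by simp
  also have "\<dots> = (A *\<^sub>v vec_first v p + B *\<^sub>v vec_last v p) @\<^sub>v (C *\<^sub>v vec_first v p + D *\<^sub>v vec_last v p)"
    by (rule four_block_mat_mult_vec[OF A B C D]) simp_all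
  finally show ?thesis using A B C D i by (simp add: mult_2)
qed

lemma zero_mv_idx: "x \<in> carrier_vec m \<Longrightarrow> i < n \<Longrightarrow> (0\<^sub>m n m *\<^sub>v x) $ i = (0::complex)"
  by (simp add: index_mult_mat_vec scalar_prod_def)

lemma vf_idx: "i < p \<Longrightarrow> vec_first v p $ i = v $ i"
  by (simp add: vec_first_def)

lemma vl_idx: "v \<in> carrier_vec (2*p) \<Longrightarrow> i < p \<Longrightarrow> vec_last v p $ i = v $ (i + p)"
  by (simp add: vec_last_def add.commute)

lemma sgn_blk_mv: assumes "x \<in> carrier_vec p" "i < p"
  shows "(1\<^sub>m p *\<^sub>v x) $ i = x $ i" "((- 1\<^sub>m p) *\<^sub>v x) $ i = - (x $ i)"
    "(0\<^sub>m p p *\<^sub>v x) $ i = (0::complex)"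
  using assms by (simp_all add: zero_mv_idx)

lemma j_carrier[simp]: "jmat p \<in> carrier_mat (2*p) (2*p)"
  unfolding jmat_def mult_2 by (rule four_block_carrier_mat) simp_all

lemma J_carrier[simp]: "Jmat p \<in> carrier_mat (2*p) (2*p)"
  unfolding Jmat_def mult_2 by (rule four_block_carrier_mat) simp_all

lemma K_carrier[simp]: "Kmat p \<in> carrier_mat (2*p) (2*p)"
  unfolding Kmat_def mult_2 by (rule smult_carrier_mat, rule four_block_carrier_mat) simp_all

lemma j_mv: assumes v: "v \<in> carrier_vec (2*p)" and i: "i < 2*p"
  shows "(jmat p *\<^sub>v v) $ i = (if i < p then v $ i else - (v $ i))"
  unfolding jmat_def using v i
  by (subst fb_mv[where p=p]) (auto simp: vf_idx vl_idx zero_mv_idx)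

lemma J_mv: assumes v: "v \<in> carrier_vec (2*p)" and i: "i < 2*p"
  shows "(Jmat p *\<^sub>v v) $ i = (if i < p then v $ (i + p) else v $ (i - p))"
  unfolding Jmat_def using v i
  by (subst fb_mv[where p=p]) (auto simp: vf_idx vl_idx zero_mv_idx)


abbreviation cK :: complex where "cK \<equiv> complex_of_real (1 / sqrt 2)"

lemma jJK_dims[simp]: "dim_row (jmat p) = 2*p" "dim_col (jmat p) = 2*p"
  "dim_row (Jmat p) = 2*p" "dim_col (Jmat p) = 2*p"
  "dim_row (Kmat p) = 2*p" "dim_col (Kmat p) = 2*p"
  by (simp_all add: jmat_def Jmat_def Kmat_def mult_2)

lemma cK_sq: "cK * cK = 1/2"
proof -
  have "cK * cK = complex_of_real ((1 / sqrt 2) * (1 / sqrt 2))" by (simp only: of_real_mult)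
  also have "(1 / sqrt 2) * (1 / sqrt 2) = (1/2::real)" by (simp add: field_simps)
  finally show ?thesis by simp
qed

lemma K_mv: assumes v: "v \<in> carrier_vec (2*p)" and i: "i < 2*p"
  shows "(Kmat p *\<^sub>v v) $ i = cK * (if i < p then v $ i - v $ (i + p) else v $ (i - p) + v $ i)"
proof -
  have F: "four_block_mat (1\<^sub>m p) (- 1\<^sub>m p) (1\<^sub>m p) (1\<^sub>m p) \<in> carrier_mat (2*p) (2*(p::nat)) \<and> True"
    unfolding mult_2 by (simp add: four_block_carrier_mat)
  have "(Kmat p *\<^sub>v v) = cK \<cdot>\<^sub>v (four_block_mat (1\<^sub>m p) (- 1\<^sub>m p) (1\<^sub>m p) (1\<^sub>m p) *\<^sub>v v)"
    unfolding Kmat_def by (rule smult_mat_mv) (use F v in auto)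
  moreover have "((four_block_mat (1\<^sub>m p) (- 1\<^sub>m p) (1\<^sub>m p) (1\<^sub>m p) :: complex mat) *\<^sub>v v) $ i = (if i < p then v $ i - v $ (i + p) else v $ (i - p) + v $ i)"
    using v i by (subst fb_mv[where p=p]) (auto simp: vf_idx vl_idx zero_mv_idx)
  ultimately show ?thesis using v i by simp
qed

lemma adjK: "mat_adjoint (Kmat p) = cK \<cdot>\<^sub>m four_block_mat (1\<^sub>m p) (1\<^sub>m p) (- 1\<^sub>m p) (1\<^sub>m p)"
  by (rule eq_matI) (auto simp: Kmat_def)

lemma adjK_mv: assumes v: "v \<in> carrier_vec (2*p)" and i: "i < 2*p"
  shows "(mat_adjoint (Kmat p) *\<^sub>v v) $ i = cK * (if i < p then v $ i + v $ (i + p) else v $ i - v $ (i - p))"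
proof -
  have F: "four_block_mat (1\<^sub>m p) (1\<^sub>m p) (- 1\<^sub>m p) (1\<^sub>m p) \<in> carrier_mat (2*p) (2*(p::nat)) \<and> True"
    unfolding mult_2 by (simp add: four_block_carrier_mat)
  have "(mat_adjoint (Kmat p) *\<^sub>v v) = cK \<cdot>\<^sub>v (four_block_mat (1\<^sub>m p) (1\<^sub>m p) (- 1\<^sub>m p) (1\<^sub>m p) *\<^sub>v v)"
    unfolding adjK by (rule smult_mat_mv) (use F v in auto)
  moreover have "((four_block_mat (1\<^sub>m p) (1\<^sub>m p) (- 1\<^sub>m p) (1\<^sub>m p) :: complex mat) *\<^sub>v v) $ i = (if i < p then v $ i + v $ (i + p) else v $ i - v $ (i - p))"
    using v i by (subst fb_mv[where p=p]) (auto simp: vf_idx vl_idx zero_mv_idx)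
  ultimately show ?thesis using v i by simp
qed

lemma adj_j: "mat_adjoint (jmat p) = jmat p"
  by (rule eq_matI) (auto simp: jmat_def)

lemma KjK: assumes z: "z \<in> carrier_vec (2*p)"
  shows "Kmat p *\<^sub>v (jmat p *\<^sub>v (mat_adjoint (Kmat p) *\<^sub>v z)) = Jmat p *\<^sub>v z"
proof (rule eq_vecI)
  have c1: "mat_adjoint (Kmat p) *\<^sub>v z \<in> carrier_vec (2*p)"
    using mult_mat_vec_carrier[OF adj_carrier[OF K_carrier] z] .
  have c2: "jmat p *\<^sub>v (mat_adjoint (Kmat p) *\<^sub>v z) \<in> carrier_vec (2*p)"
    using mult_mat_vec_carrier[OF j_carrier c1] .
  fix i assume "i < dim_vec (Jmat p *\<^sub>v z)"
  hence i: "i < 2*p" by simp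
  show "(Kmat p *\<^sub>v (jmat p *\<^sub>v (mat_adjoint (Kmat p) *\<^sub>v z))) $ i = (Jmat p *\<^sub>v z) $ i"
  proof (cases "i < p")
    case True
    have a1: "(mat_adjoint (Kmat p) *\<^sub>v z) $ i = cK * (z $ i + z $ (i+p))"
      using adjK_mv[OF z i] True by simp
    have a2: "(mat_adjoint (Kmat p) *\<^sub>v z) $ (i+p) = cK * (z $ (i+p) - z $ i)"
      using adjK_mv[OF z, of "i+p"] True by simp
    have b1: "(jmat p *\<^sub>v (mat_adjoint (Kmat p) *\<^sub>v z)) $ i = cK * (z $ i + z $ (i+p))"
      using j_mv[OF c1 i] True a1 by simp
    have b2: "(jmat p *\<^sub>v (mat_adjoint (Kmat p) *\<^sub>v z)) $ (i+p) = - (cK * (z $ (i+p) - z $ i))"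
      using j_mv[OF c1, of "i+p"] True a2 by simp
    have e: "(Kmat p *\<^sub>v (jmat p *\<^sub>v (mat_adjoint (Kmat p) *\<^sub>v z))) $ i
       = cK * (cK * (z $ i + z $ (i+p)) - (- (cK * (z $ (i+p) - z $ i))))"
      using K_mv[OF c2 i] True b1 b2 by simp
    have "\<dots> = (2 * (cK * cK)) * z $ (i+p)" by (simp add: algebra_simps)
    also have "\<dots> = z $ (i+p)" by (subst cK_sq) simp
    finally show ?thesis using e True i z by (simp add: J_mv)
  next
    case False
    have ip: "i - p < p" "i - p < 2*p" "i - p + p = i" using False i by arith+
    have a1: "(mat_adjoint (Kmat p) *\<^sub>v z) $ i = cK * (z $ i - z $ (i-p))"
      using adjK_mv[OF z i] False by simp
    have a2: "(mat_adjoint (Kmat p) *\<^sub>v z) $ (i-p) = cK * (z $ (i-p) + z $ i)"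
      using adjK_mv[OF z ip(2)] ip by simp
    have b1: "(jmat p *\<^sub>v (mat_adjoint (Kmat p) *\<^sub>v z)) $ i = - (cK * (z $ i - z $ (i-p)))"
      using j_mv[OF c1 i] False a1 by simp
    have b2: "(jmat p *\<^sub>v (mat_adjoint (Kmat p) *\<^sub>v z)) $ (i-p) = cK * (z $ (i-p) + z $ i)"
      using j_mv[OF c1 ip(2)] ip a2 by simp
    have e: "(Kmat p *\<^sub>v (jmat p *\<^sub>v (mat_adjoint (Kmat p) *\<^sub>v z))) $ i
       = cK * (cK * (z $ (i-p) + z $ i) + (- (cK * (z $ i - z $ (i-p)))))"
      using K_mv[OF c2 i] False b1 b2 by simp
    have "\<dots> = (2 * (cK * cK)) * z $ (i-p)" by (simp add: algebra_simps)
    also have "\<dots> = z $ (i-p)" by (subst cK_sq) simp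
    finally show ?thesis using e False i z by (simp add: J_mv)
  qed
qed simp


lemma step:
  fixes G S :: "complex mat" and u :: "complex vec"
  assumes G: "G \<in> carrier_mat q n" and S: "S \<in> carrier_mat n n" and Sa: "mat_adjoint S = S"
    and GSG: "\<forall>x \<in> carrier_vec q. G *\<^sub>v (S *\<^sub>v (mat_adjoint G *\<^sub>v x)) = x"
    and u: "u \<in> carrier_vec n" and u0: "u \<noteq> 0\<^sub>v n" and neg: "Re ((S *\<^sub>v u) \<bullet>c u) \<le> 0"
  shows "u - mat_adjoint G *\<^sub>v (G *\<^sub>v (S *\<^sub>v u)) \<noteq> 0\<^sub>v n
     \<and> Re ((S *\<^sub>v (u - mat_adjoint G *\<^sub>v (G *\<^sub>v (S *\<^sub>v u)))) \<bullet>c (u - mat_adjoint G *\<^sub>v (G *\<^sub>v (S *\<^sub>v u)))) \<le> 0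
     \<and> G *\<^sub>v (S *\<^sub>v (u - mat_adjoint G *\<^sub>v (G *\<^sub>v (S *\<^sub>v u)))) = 0\<^sub>v q"
proof -
  define x where "x = G *\<^sub>v (S *\<^sub>v u)"
  define w where "w = mat_adjoint G *\<^sub>v x"
  have aG: "mat_adjoint G \<in> carrier_mat n q" using G by simp
  have Su: "S *\<^sub>v u \<in> carrier_vec n" using S u by simp
  have x: "x \<in> carrier_vec q" unfolding x_def using G Su by simp
  have w: "w \<in> carrier_vec n" unfolding w_def using aG x by simp
  have Sw: "S *\<^sub>v w \<in> carrier_vec n" using S w by simp
  have GSw: "G *\<^sub>v (S *\<^sub>v w) = x" unfolding w_def using GSG x by simp
  have t1: "(S *\<^sub>v u) \<bullet>c w = x \<bullet>c x"
    unfolding w_def x_def using adj_inner[OF G Su x[unfolded x_def]] by simp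
  have t2: "(S *\<^sub>v w) \<bullet>c u = x \<bullet>c x"
  proof -
    have "(S *\<^sub>v w) \<bullet>c u = w \<bullet>c (S *\<^sub>v u)" using adj_inner[OF S w u] Sa by simp
    also have "\<dots> = x \<bullet>c (G *\<^sub>v (S *\<^sub>v u))" unfolding w_def using adj_inner[OF aG x Su] by simp
    finally show ?thesis unfolding x_def .
  qed
  have t3: "(S *\<^sub>v w) \<bullet>c w = x \<bullet>c x"
    using adj_inner[OF G Sw x] GSw unfolding w_def by simp
  have xx: "0 \<le> x \<bullet>c x" by (rule conjugate_square_ge_0_vec)
  hence xxr: "0 \<le> Re (x \<bullet>c x)" "Im (x \<bullet>c x) = 0" by (auto simp: less_eq_complex_def)
  have Suw: "S *\<^sub>v (u - w) = S *\<^sub>v u - S *\<^sub>v w" using S u w by (simp add: mult_minus_distrib_mat_vec)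
  have form: "(S *\<^sub>v (u - w)) \<bullet>c (u - w) = (S *\<^sub>v u) \<bullet>c u - x \<bullet>c x"
  proof -
    have "(S *\<^sub>v (u - w)) \<bullet>c (u - w) = ((S *\<^sub>v u) \<bullet>c u - (S *\<^sub>v u) \<bullet>c w) - ((S *\<^sub>v w) \<bullet>c u - (S *\<^sub>v w) \<bullet>c w)"
      unfolding Suw
      by (simp add: cs_minus_left[OF Su Sw, of "u - w"] cs_minus_right[OF u w Su] cs_minus_right[OF u w Sw] u w)
    then show ?thesis using t1 t2 t3 by simp
  qed
  have GS0: "G *\<^sub>v (S *\<^sub>v (u - w)) = 0\<^sub>v q"
    unfolding Suw using G Su Sw GSw by (simp add: mult_minus_distrib_mat_vec x_def)
  have nz: "u - w \<noteq> 0\<^sub>v n"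
  proof
    assume "u - w = 0\<^sub>v n"
    note uw0 = this
    have uw: "u = w"
    proof (rule eq_vecI)
      fix i assume i: "i < dim_vec w"
      hence "(u - w) $ i = 0" using uw0 w by simp
      thus "u $ i = w $ i" using u w i by simp
    qed (use u w in simp)
    have "(S *\<^sub>v u) \<bullet>c u = x \<bullet>c x" using t3 uw by simp
    hence "Re (x \<bullet>c x) = 0" using neg xxr by simp
    hence "x \<bullet>c x = 0" using xxr by (simp add: complex_eq_iff)
    hence "x = 0\<^sub>v q" using x by simp
    hence "w = 0\<^sub>v n" unfolding w_def using aG carrier_matD[OF aG] by (intro eq_vecI) (auto simp: index_mult_mat_vec scalar_prod_def)
    thus False using uw u0 by simp
  qed
  have "Re ((S *\<^sub>v (u - w)) \<bullet>c (u - w)) \<le> 0" using form neg xxr by simp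
  thus ?thesis using nz GS0 unfolding w_def x_def by simp
qed

lemma form_scale: assumes S: "(S::complex mat) \<in> carrier_mat n n" and v: "v \<in> carrier_vec n"
  shows "(S *\<^sub>v (r \<cdot>\<^sub>v v)) \<bullet>c (r \<cdot>\<^sub>v v) = (r * cnj r) * ((S *\<^sub>v v) \<bullet>c v)"
proof -
  have Sv: "S *\<^sub>v v \<in> carrier_vec n" using S v by simp
  have "(S *\<^sub>v (r \<cdot>\<^sub>v v)) = r \<cdot>\<^sub>v (S *\<^sub>v v)" by (rule mult_mat_vec[OF S v])
  moreover have "conjugate (r \<cdot>\<^sub>v v) = cnj r \<cdot>\<^sub>v conjugate v" by (simp add: conjugate_smult_vec)
  ultimately show ?thesis using Sv v by simp
qed


definition Bv :: "nat \<Rightarrow> (nat \<Rightarrow> complex mat) \<Rightarrow> nat \<Rightarrow> complex vec \<Rightarrow> complex vec" where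
  "Bv p \<beta> k u = 2 \<cdot>\<^sub>v (u - mat_adjoint (\<beta> k * Kmat p) *\<^sub>v ((\<beta> k * Kmat p) *\<^sub>v (jmat p *\<^sub>v u)))"

lemma adjK_carrier[simp]: "mat_adjoint (Kmat p) \<in> carrier_mat (2*p) (2*p)"
  by simp

lemma C_carrier: assumes b: "b \<in> carrier_mat p (2*p)"
  shows "2 \<cdot>\<^sub>m (mat_adjoint (Kmat p) * mat_adjoint b * b * Kmat p) - jmat p \<in> carrier_mat (2*p) (2*p)"
  using b by (intro minus_carrier_mat) (auto intro!: mult_carrier_mat smult_carrier_mat)

lemma Cmat_carrier: "\<beta> k \<in> carrier_mat p (2*p) \<Longrightarrow> Cmat p \<beta> k \<in> carrier_mat (2*p) (2*p)"
  unfolding Cmat_def by (rule C_carrier)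

lemma C_mv: assumes b: "\<beta> k \<in> carrier_mat p (2*p)" and y: "y \<in> carrier_vec (2*p)"
  shows "Cmat p \<beta> k *\<^sub>v y = 2 \<cdot>\<^sub>v (mat_adjoint (\<beta> k * Kmat p) *\<^sub>v ((\<beta> k * Kmat p) *\<^sub>v y)) - jmat p *\<^sub>v y"
proof -
  let ?b = "\<beta> k"
  let ?M = "mat_adjoint (Kmat p) * mat_adjoint ?b * ?b * Kmat p"
  have ab: "mat_adjoint ?b \<in> carrier_mat (2*p) p" using b by simp
  have M: "?M \<in> carrier_mat (2*p) (2*p)" using b ab by (auto intro!: mult_carrier_mat)
  have "Cmat p \<beta> k *\<^sub>v y = (2 \<cdot>\<^sub>m ?M) *\<^sub>v y - jmat p *\<^sub>v y"
    unfolding Cmat_def using M y by (intro minus_mult_distrib_mat_vec) auto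
  also have "(2 \<cdot>\<^sub>m ?M) *\<^sub>v y = 2 \<cdot>\<^sub>v (?M *\<^sub>v y)" by (rule smult_mat_mv[OF M y])
  also have "?M *\<^sub>v y = mat_adjoint (Kmat p) *\<^sub>v (mat_adjoint ?b *\<^sub>v (?b *\<^sub>v (Kmat p *\<^sub>v y)))"
  proof -
    have c1: "mat_adjoint (Kmat p) * mat_adjoint ?b \<in> carrier_mat (2*p) p" using mult_carrier_mat[OF adjK_carrier ab] .
    have c2: "mat_adjoint (Kmat p) * mat_adjoint ?b * ?b \<in> carrier_mat (2*p) (2*p)" using mult_carrier_mat[OF c1 b] .
    have Ky: "Kmat p *\<^sub>v y \<in> carrier_vec (2*p)" using mult_mat_vec_carrier[OF K_carrier y] .
    have bKy: "?b *\<^sub>v (Kmat p *\<^sub>v y) \<in> carrier_vec p" using mult_mat_vec_carrier[OF b Ky] .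
    have "?M *\<^sub>v y = (mat_adjoint (Kmat p) * mat_adjoint ?b * ?b) *\<^sub>v (Kmat p *\<^sub>v y)"
      by (rule assoc_mult_mat_vec[OF c2 K_carrier y])
    also have "\<dots> = (mat_adjoint (Kmat p) * mat_adjoint ?b) *\<^sub>v (?b *\<^sub>v (Kmat p *\<^sub>v y))"
      by (rule assoc_mult_mat_vec[OF c1 b Ky])
    also have "\<dots> = mat_adjoint (Kmat p) *\<^sub>v (mat_adjoint ?b *\<^sub>v (?b *\<^sub>v (Kmat p *\<^sub>v y)))"
      by (rule assoc_mult_mat_vec[OF adjK_carrier ab bKy])
    finally show ?thesis .
  qed
  also have "\<dots> = mat_adjoint (?b * Kmat p) *\<^sub>v ((?b * Kmat p) *\<^sub>v y)"
  proof -
    have Ky: "Kmat p *\<^sub>v y \<in> carrier_vec (2*p)" using mult_mat_vec_carrier[OF K_carrier y] .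
    have bKy: "?b *\<^sub>v (Kmat p *\<^sub>v y) \<in> carrier_vec p" using mult_mat_vec_carrier[OF b Ky] .
    have "(?b * Kmat p) *\<^sub>v y = ?b *\<^sub>v (Kmat p *\<^sub>v y)" by (rule assoc_mult_mat_vec[OF b K_carrier y])
    moreover have "mat_adjoint (?b * Kmat p) *\<^sub>v (?b *\<^sub>v (Kmat p *\<^sub>v y)) = mat_adjoint (Kmat p) *\<^sub>v (mat_adjoint ?b *\<^sub>v (?b *\<^sub>v (Kmat p *\<^sub>v y)))"
      unfolding adj_mult[OF b K_carrier] by (rule assoc_mult_mat_vec[OF adjK_carrier ab bKy])
    ultimately show ?thesis by simp
  qed
  finally show ?thesis .
qed


lemma C_adj: assumes b: "\<beta> k \<in> carrier_mat p (2*p)"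
  shows "mat_adjoint (Cmat p \<beta> k) = Cmat p \<beta> k"
proof -
  let ?b = "\<beta> k"
  have ab: "mat_adjoint ?b \<in> carrier_mat (2*p) p" using b by simp
  have c1: "mat_adjoint (Kmat p) * mat_adjoint ?b \<in> carrier_mat (2*p) p" using mult_carrier_mat[OF adjK_carrier ab] .
  have c2: "mat_adjoint (Kmat p) * mat_adjoint ?b * ?b \<in> carrier_mat (2*p) (2*p)" using mult_carrier_mat[OF c1 b] .
  have M: "mat_adjoint (Kmat p) * mat_adjoint ?b * ?b * Kmat p \<in> carrier_mat (2*p) (2*p)" using mult_carrier_mat[OF c2 K_carrier] .
  have aM: "mat_adjoint (mat_adjoint (Kmat p) * mat_adjoint ?b * ?b * Kmat p) = mat_adjoint (Kmat p) * mat_adjoint ?b * ?b * Kmat p"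
  proof -
    have "mat_adjoint (mat_adjoint (Kmat p) * mat_adjoint ?b * ?b * Kmat p)
        = mat_adjoint (Kmat p) * mat_adjoint (mat_adjoint (Kmat p) * mat_adjoint ?b * ?b)"
      by (rule adj_mult[OF c2 K_carrier])
    also have "mat_adjoint (mat_adjoint (Kmat p) * mat_adjoint ?b * ?b) = mat_adjoint ?b * mat_adjoint (mat_adjoint (Kmat p) * mat_adjoint ?b)"
      by (rule adj_mult[OF c1 b])
    also have "mat_adjoint (mat_adjoint (Kmat p) * mat_adjoint ?b) = ?b * Kmat p"
      using adj_mult[OF adjK_carrier ab] by simp
    finally have e: "mat_adjoint (mat_adjoint (Kmat p) * mat_adjoint ?b * ?b * Kmat p)
        = mat_adjoint (Kmat p) * (mat_adjoint ?b * (?b * Kmat p))" .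
    have "mat_adjoint (Kmat p) * mat_adjoint ?b * ?b * Kmat p = mat_adjoint (Kmat p) * mat_adjoint ?b * (?b * Kmat p)"
      by (rule assoc_mult_mat[OF c1 b K_carrier])
    also have "\<dots> = mat_adjoint (Kmat p) * (mat_adjoint ?b * (?b * Kmat p))"
      by (rule assoc_mult_mat[OF adjK_carrier ab mult_carrier_mat[OF b K_carrier]])
    finally show ?thesis using e by simp
  qed
  show ?thesis unfolding Cmat_def
    using adj_minus[OF smult_carrier_mat[OF M] j_carrier] by (simp add: adj_smult aM adj_j)
qed

lemma W_carrier: assumes b: "\<forall>k \<le> N. \<beta> k \<in> carrier_mat p (2*p)"
  shows "k \<le> Suc N \<Longrightarrow> Wmat p \<beta> k l \<in> carrier_mat (2*p) (2*p)"
proof (induction k)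
  case 0 then show ?case by simp
next
  case (Suc k)
  have W: "Wmat p \<beta> k l \<in> carrier_mat (2*p) (2*p)" using Suc by simp
  have C: "Cmat p \<beta> k \<in> carrier_mat (2*p) (2*p)" using Cmat_carrier b Suc.prems by simp
  have "jmat p * Cmat p \<beta> k * Wmat p \<beta> k l \<in> carrier_mat (2*p) (2*p)"
    using mult_carrier_mat[OF mult_carrier_mat[OF j_carrier C] W] .
  then show ?case by (simp add: minus_carrier_mat)
qed

lemma j_j: assumes u: "u \<in> carrier_vec (2*p)" shows "jmat p *\<^sub>v (jmat p *\<^sub>v u) = u"
proof (rule eq_vecI)
  have ju: "jmat p *\<^sub>v u \<in> carrier_vec (2*p)" using mult_mat_vec_carrier[OF j_carrier u] .
  fix i assume "i < dim_vec u" hence i: "i < 2*p" using u by simp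
  show "(jmat p *\<^sub>v (jmat p *\<^sub>v u)) $ i = u $ i"
    using j_mv[OF ju i] j_mv[OF u i] by simp
qed (use u in simp)


lemma W_step: assumes b: "\<forall>k \<le> N. \<beta> k \<in> carrier_mat p (2*p)" and k: "k \<le> N"
  and u: "u \<in> carrier_vec (2*p)"
  shows "mat_adjoint (Wmat p \<beta> (Suc k) \<i>) *\<^sub>v u = mat_adjoint (Wmat p \<beta> k \<i>) *\<^sub>v Bv p \<beta> k u"
proof -
  let ?W = "Wmat p \<beta> k \<i>" and ?C = "Cmat p \<beta> k" and ?j = "jmat p"
  have bk: "\<beta> k \<in> carrier_mat p (2*p)" using b k by simp
  have W: "?W \<in> carrier_mat (2*p) (2*p)" using W_carrier[OF b] k by simp
  have C: "?C \<in> carrier_mat (2*p) (2*p)" using Cmat_carrier[of \<beta> k p] bk by blast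
  have jC: "?j * ?C \<in> carrier_mat (2*p) (2*p)" using mult_carrier_mat[OF j_carrier C] .
  have jCW: "?j * ?C * ?W \<in> carrier_mat (2*p) (2*p)" using mult_carrier_mat[OF jC W] .
  have aW: "mat_adjoint ?W \<in> carrier_mat (2*p) (2*p)" using W by simp
  have Cj: "?C * ?j \<in> carrier_mat (2*p) (2*p)" using mult_carrier_mat[OF C j_carrier] .
  have ju: "?j *\<^sub>v u \<in> carrier_vec (2*p)" using mult_mat_vec_carrier[OF j_carrier u] .
  have Cju: "?C *\<^sub>v (?j *\<^sub>v u) \<in> carrier_vec (2*p)" using mult_mat_vec_carrier[OF C ju] .
  have e1: "Wmat p \<beta> (Suc k) \<i> = ?W - ?j * ?C * ?W" by (simp add: one_smult_mat')
  have e2: "mat_adjoint (?j * ?C * ?W) = mat_adjoint ?W * (?C * ?j)"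
    using adj_mult[OF jC W] adj_mult[OF j_carrier C] C_adj[of \<beta> k p, OF bk] adj_j by simp
  have "mat_adjoint (Wmat p \<beta> (Suc k) \<i>) = mat_adjoint ?W - mat_adjoint ?W * (?C * ?j)"
    unfolding e1 adj_minus[OF W jCW] e2 ..
  hence "mat_adjoint (Wmat p \<beta> (Suc k) \<i>) *\<^sub>v u = mat_adjoint ?W *\<^sub>v u - (mat_adjoint ?W * (?C * ?j)) *\<^sub>v u"
    using minus_mult_distrib_mat_vec[OF aW mult_carrier_mat[OF aW Cj] u] by simp
  also have "(mat_adjoint ?W * (?C * ?j)) *\<^sub>v u = mat_adjoint ?W *\<^sub>v (?C *\<^sub>v (?j *\<^sub>v u))"
    using assoc_mult_mat_vec[OF aW Cj u] assoc_mult_mat_vec[OF C j_carrier u] by simp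
  also have "mat_adjoint ?W *\<^sub>v u - mat_adjoint ?W *\<^sub>v (?C *\<^sub>v (?j *\<^sub>v u)) = mat_adjoint ?W *\<^sub>v (u - ?C *\<^sub>v (?j *\<^sub>v u))"
    using mult_minus_distrib_mat_vec[OF aW u Cju] by simp
  also have "u - ?C *\<^sub>v (?j *\<^sub>v u) = Bv p \<beta> k u"
  proof -
    let ?G = "\<beta> k * Kmat p"
    have G: "?G \<in> carrier_mat p (2*p)" using mult_carrier_mat[OF bk K_carrier] .
    have w: "mat_adjoint ?G *\<^sub>v (?G *\<^sub>v (?j *\<^sub>v u)) \<in> carrier_vec (2*p)"
      using mult_mat_vec_carrier[OF adj_carrier[OF G] mult_mat_vec_carrier[OF G ju]] .
    have "?C *\<^sub>v (?j *\<^sub>v u) = 2 \<cdot>\<^sub>v (mat_adjoint ?G *\<^sub>v (?G *\<^sub>v (?j *\<^sub>v u))) - u"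
      using C_mv[of \<beta> k p, OF bk ju] j_j[OF u] by simp
    then show ?thesis unfolding Bv_def
      by (intro eq_vecI) (use u w in auto)
  qed
  finally show ?thesis .
qed


lemma GSG: assumes b: "b \<in> carrier_mat p (2*p)" and bJ: "b * Jmat p * mat_adjoint b = 1\<^sub>m p"
  and x: "x \<in> carrier_vec p"
  shows "(b * Kmat p) *\<^sub>v (jmat p *\<^sub>v (mat_adjoint (b * Kmat p) *\<^sub>v x)) = x"
proof -
  have ab: "mat_adjoint b \<in> carrier_mat (2*p) p" using b by simp
  have bx: "mat_adjoint b *\<^sub>v x \<in> carrier_vec (2*p)" using mult_mat_vec_carrier[OF ab x] .
  have akbx: "mat_adjoint (Kmat p) *\<^sub>v (mat_adjoint b *\<^sub>v x) \<in> carrier_vec (2*p)"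
    using mult_mat_vec_carrier[OF adjK_carrier bx] .
  have jt: "jmat p *\<^sub>v (mat_adjoint (Kmat p) *\<^sub>v (mat_adjoint b *\<^sub>v x)) \<in> carrier_vec (2*p)"
    using mult_mat_vec_carrier[OF j_carrier akbx] .
  have "mat_adjoint (b * Kmat p) *\<^sub>v x = mat_adjoint (Kmat p) *\<^sub>v (mat_adjoint b *\<^sub>v x)"
    unfolding adj_mult[OF b K_carrier] by (rule assoc_mult_mat_vec[OF adjK_carrier ab x])
  hence "(b * Kmat p) *\<^sub>v (jmat p *\<^sub>v (mat_adjoint (b * Kmat p) *\<^sub>v x))
      = b *\<^sub>v (Kmat p *\<^sub>v (jmat p *\<^sub>v (mat_adjoint (Kmat p) *\<^sub>v (mat_adjoint b *\<^sub>v x))))"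
    using assoc_mult_mat_vec[OF b K_carrier jt] by simp
  also have "\<dots> = b *\<^sub>v (Jmat p *\<^sub>v (mat_adjoint b *\<^sub>v x))" using KjK[OF bx] by simp
  also have "\<dots> = (b * Jmat p) *\<^sub>v (mat_adjoint b *\<^sub>v x)"
    using assoc_mult_mat_vec[OF b J_carrier bx] by simp
  also have "\<dots> = (b * Jmat p * mat_adjoint b) *\<^sub>v x"
    using assoc_mult_mat_vec[OF mult_carrier_mat[OF b J_carrier] ab x] by simp
  also have "\<dots> = x" using bJ x by simp
  finally show ?thesis .
qed

lemma Bv_good:
  assumes b: "\<beta> k \<in> carrier_mat p (2*p)" and bJ: "\<beta> k * Jmat p * mat_adjoint (\<beta> k) = 1\<^sub>m p"
    and u: "u \<in> carrier_vec (2*p)" and u0: "u \<noteq> 0\<^sub>v (2*p)" and neg: "Re ((jmat p *\<^sub>v u) \<bullet>c u) \<le> 0"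
  shows "Bv p \<beta> k u \<in> carrier_vec (2*p) \<and> Bv p \<beta> k u \<noteq> 0\<^sub>v (2*p)
     \<and> Re ((jmat p *\<^sub>v Bv p \<beta> k u) \<bullet>c Bv p \<beta> k u) \<le> 0
     \<and> (\<beta> k * Kmat p) *\<^sub>v (jmat p *\<^sub>v Bv p \<beta> k u) = 0\<^sub>v p"
proof -
  let ?G = "\<beta> k * Kmat p"
  have G: "?G \<in> carrier_mat p (2*p)" using mult_carrier_mat[OF b K_carrier] .
  have gsg: "\<forall>x \<in> carrier_vec p. ?G *\<^sub>v (jmat p *\<^sub>v (mat_adjoint ?G *\<^sub>v x)) = x"
    using GSG[OF b bJ] by blast
  define v where "v = u - mat_adjoint ?G *\<^sub>v (?G *\<^sub>v (jmat p *\<^sub>v u))"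
  have st: "v \<noteq> 0\<^sub>v (2*p) \<and> Re ((jmat p *\<^sub>v v) \<bullet>c v) \<le> 0 \<and> ?G *\<^sub>v (jmat p *\<^sub>v v) = 0\<^sub>v p"
    unfolding v_def by (rule step[OF G j_carrier adj_j gsg u u0 neg])
  have v: "v \<in> carrier_vec (2*p)" unfolding v_def
    by (rule minus_carrier_vec[OF u mult_mat_vec_carrier[OF adj_carrier[OF G] mult_mat_vec_carrier[OF G mult_mat_vec_carrier[OF j_carrier u]]]])
  have Bv: "Bv p \<beta> k u = 2 \<cdot>\<^sub>v v" unfolding Bv_def v_def ..
  have c: "Bv p \<beta> k u \<in> carrier_vec (2*p)" unfolding Bv using v by simp
  have nz: "Bv p \<beta> k u \<noteq> 0\<^sub>v (2*p)"
  proof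
    assume "Bv p \<beta> k u = 0\<^sub>v (2*p)"
    hence h: "2 \<cdot>\<^sub>v v = 0\<^sub>v (2*p)" unfolding Bv .
    have "v = 0\<^sub>v (2*p)"
    proof (rule eq_vecI)
      fix i assume i: "i < dim_vec (0\<^sub>v (2*p) :: complex vec)"
      have "(2 \<cdot>\<^sub>v v) $ i = 0" using h i by simp
      thus "v $ i = 0\<^sub>v (2*p) $ i" using i v by simp
    qed (use v in simp)
    thus False using st by simp
  qed
  have f: "(jmat p *\<^sub>v Bv p \<beta> k u) \<bullet>c Bv p \<beta> k u = 4 * ((jmat p *\<^sub>v v) \<bullet>c v)"
    unfolding Bv using form_scale[OF j_carrier v, of 2] by simp
  have g: "(\<beta> k * Kmat p) *\<^sub>v (jmat p *\<^sub>v Bv p \<beta> k u) = 0\<^sub>v p"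
  proof -
    have jv: "jmat p *\<^sub>v v \<in> carrier_vec (2*p)" using mult_mat_vec_carrier[OF j_carrier v] .
    have "(\<beta> k * Kmat p) *\<^sub>v (jmat p *\<^sub>v Bv p \<beta> k u) = 2 \<cdot>\<^sub>v (?G *\<^sub>v (jmat p *\<^sub>v v))"
      unfolding Bv using mult_mat_vec[OF j_carrier v, of 2] mult_mat_vec[OF G jv, of 2] by simp
    also have "\<dots> = 0\<^sub>v p" using st by (intro eq_vecI) auto
    finally show ?thesis .
  qed
  show ?thesis using c nz f g st by simp
qed


lemma chain:
  assumes b: "\<forall>k \<le> N. \<beta> k \<in> carrier_mat p (2*p)"
    and bJ: "\<forall>k \<le> N. \<beta> k * Jmat p * mat_adjoint (\<beta> k) = 1\<^sub>m p"
  shows "k \<le> N \<Longrightarrow> u \<in> carrier_vec (2*p) \<Longrightarrow> u \<noteq> 0\<^sub>v (2*p) \<Longrightarrow> Re ((jmat p *\<^sub>v u) \<bullet>c u) \<le> 0 \<Longrightarrow>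
    mat_adjoint (Wmat p \<beta> (Suc k) \<i>) *\<^sub>v u \<in> carrier_vec (2*p)
    \<and> mat_adjoint (Wmat p \<beta> (Suc k) \<i>) *\<^sub>v u \<noteq> 0\<^sub>v (2*p)
    \<and> (\<beta> 0 * Kmat p) *\<^sub>v (jmat p *\<^sub>v (mat_adjoint (Wmat p \<beta> (Suc k) \<i>) *\<^sub>v u)) = 0\<^sub>v p"
proof (induction k arbitrary: u)
  case 0
  have g: "Bv p \<beta> 0 u \<in> carrier_vec (2*p) \<and> Bv p \<beta> 0 u \<noteq> 0\<^sub>v (2*p)
     \<and> Re ((jmat p *\<^sub>v Bv p \<beta> 0 u) \<bullet>c Bv p \<beta> 0 u) \<le> 0
     \<and> (\<beta> 0 * Kmat p) *\<^sub>v (jmat p *\<^sub>v Bv p \<beta> 0 u) = 0\<^sub>v p"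
    using Bv_good[of \<beta> 0 p u] b bJ 0 by simp
  have "mat_adjoint (Wmat p \<beta> (Suc 0) \<i>) *\<^sub>v u = mat_adjoint (Wmat p \<beta> 0 \<i>) *\<^sub>v Bv p \<beta> 0 u"
    using W_step[OF b _ 0(2), of 0] by simp
  also have "\<dots> = Bv p \<beta> 0 u" using g by simp
  finally show ?case using g by simp
next
  case (Suc k)
  have kN: "Suc k \<le> N" using Suc.prems by simp
  have g: "Bv p \<beta> (Suc k) u \<in> carrier_vec (2*p) \<and> Bv p \<beta> (Suc k) u \<noteq> 0\<^sub>v (2*p)
     \<and> Re ((jmat p *\<^sub>v Bv p \<beta> (Suc k) u) \<bullet>c Bv p \<beta> (Suc k) u) \<le> 0"
    using Bv_good[of \<beta> "Suc k" p u] b bJ kN Suc.prems by simp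
  have e: "mat_adjoint (Wmat p \<beta> (Suc (Suc k)) \<i>) *\<^sub>v u = mat_adjoint (Wmat p \<beta> (Suc k) \<i>) *\<^sub>v Bv p \<beta> (Suc k) u"
    using W_step[OF b kN Suc.prems(2)] by simp
  show ?case unfolding e using Suc.IH[of "Bv p \<beta> (Suc k) u"] g kN by simp
qed


lemma beta1_inj:
  assumes b: "b \<in> carrier_mat p (2*p)" and bJ: "b * Jmat p * mat_adjoint b = 1\<^sub>m p"
    and a: "a \<in> carrier_vec p" and h: "\<forall>r<p. (\<Sum>c\<in>{0..<p}. b $$ (r,c) * a $ c) = 0"
  shows "a = 0\<^sub>v p"
proof (rule ccontr)
  assume a0: "a \<noteq> 0\<^sub>v p"
  define B1 where "B1 = mat p p (\<lambda>(r,c). b $$ (r,c))"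
  have B1: "B1 \<in> carrier_mat p p" unfolding B1_def by simp
  have "B1 *\<^sub>v a = 0\<^sub>v p"
  proof (rule eq_vecI)
    fix r assume "r < dim_vec (0\<^sub>v p :: complex vec)"
    hence r: "r < p" by simp
    have "(B1 *\<^sub>v a) $ r = (\<Sum>c\<in>{0..<p}. b $$ (r,c) * a $ c)"
      using r a unfolding B1_def by (simp add: index_mult_mat_vec scalar_prod_def)
    thus "(B1 *\<^sub>v a) $ r = 0\<^sub>v p $ r" using h r by simp
  qed (simp add: B1_def)
  hence "det B1 = 0" using det_0_iff_vec_prod_zero[OF B1] a a0 by blast
  hence "det (transpose_mat B1) = 0" using det_transpose[OF B1] by simp
  moreover have tB1: "transpose_mat B1 \<in> carrier_mat p p" using B1 by simp
  ultimately obtain y where y: "y \<in> carrier_vec p" "y \<noteq> 0\<^sub>v p" "transpose_mat B1 *\<^sub>v y = 0\<^sub>v p"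
    using det_0_iff_vec_prod_zero[OF tB1] by blast
  have hy: "(\<Sum>r\<in>{0..<p}. b $$ (r,c) * y $ r) = 0" if c: "c < p" for c
  proof -
    have e1: "(transpose_mat B1 *\<^sub>v y) $ c = (\<Sum>r\<in>{0..<p}. b $$ (r,c) * y $ r)"
      using c y(1) unfolding B1_def by (simp add: index_mult_mat_vec scalar_prod_def)
    have e2: "(transpose_mat B1 *\<^sub>v y) $ c = 0" unfolding y(3) using c by simp
    show ?thesis using e1 e2 by simp
  qed
  define y' where "y' = conjugate y"
  have y': "y' \<in> carrier_vec p" unfolding y'_def using y by simp
  have y'0: "y' \<noteq> 0\<^sub>v p" unfolding y'_def using y by simp
  have ab: "mat_adjoint b \<in> carrier_mat (2*p) p" using b by simp
  define s where "s = mat_adjoint b *\<^sub>v y'"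
  have s: "s \<in> carrier_vec (2*p)" unfolding s_def using mult_mat_vec_carrier[OF ab y'] .
  have s0: "s $ c = 0" if c: "c < p" for c
  proof -
    have "s $ c = (\<Sum>r\<in>{0..<p}. cnj (b $$ (r,c)) * cnj (y $ r))"
      using c y b unfolding s_def y'_def by (simp add: index_mult_mat_vec scalar_prod_def)
    also have "\<dots> = cnj (\<Sum>r\<in>{0..<p}. b $$ (r,c) * y $ r)" by (simp add: cnj_sum)
    also have "\<dots> = 0" using hy[OF c] by simp
    finally show ?thesis .
  qed
  have Js: "Jmat p *\<^sub>v s \<in> carrier_vec (2*p)" using mult_mat_vec_carrier[OF J_carrier s] .
  have "y' \<bullet>c y' = ((b * Jmat p * mat_adjoint b) *\<^sub>v y') \<bullet>c y'" using bJ y' by simp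
  also have "(b * Jmat p * mat_adjoint b) *\<^sub>v y' = b *\<^sub>v (Jmat p *\<^sub>v s)"
    unfolding s_def using assoc_mult_mat_vec[OF mult_carrier_mat[OF b J_carrier] ab y']
      assoc_mult_mat_vec[OF b J_carrier mult_mat_vec_carrier[OF ab y']] by simp
  also have "(b *\<^sub>v (Jmat p *\<^sub>v s)) \<bullet>c y' = (Jmat p *\<^sub>v s) \<bullet>c s"
    unfolding s_def using adj_inner[OF b Js[unfolded s_def] y'] by simp
  also have "\<dots> = 0"
  proof -
    have "(Jmat p *\<^sub>v s) \<bullet>c s = (\<Sum>i\<in>{0..<2*p}. (Jmat p *\<^sub>v s) $ i * cnj (s $ i))"
      using s by (simp add: scalar_prod_def)
    also have "\<dots> = 0"
    proof (rule sum.neutral, rule ballI)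
      fix i assume "i \<in> {0..<2*p}"
      hence i: "i < 2*p" by simp
      show "(Jmat p *\<^sub>v s) $ i * cnj (s $ i) = 0"
      proof (cases "i < p")
        case True thus ?thesis using s0[OF True] by simp
      next
        case False
        hence "i - p < p" using i by arith
        thus ?thesis using J_mv[OF s i] False s0 by simp
      qed
    qed
    finally show ?thesis .
  qed
  finally have "y' \<bullet>c y' = 0" .
  hence "y' = 0\<^sub>v p" using y' by simp
  thus False using y'0 by simp
qed


lemma cK_nz: "cK \<noteq> 0" by simp

lemma final_step:
  assumes b: "b \<in> carrier_mat p (2*p)" and bJ: "b * Jmat p * mat_adjoint b = 1\<^sub>m p"
    and v: "v \<in> carrier_vec (2*p)" and v0: "v \<noteq> 0\<^sub>v (2*p)"
    and g: "(b * Kmat p) *\<^sub>v (jmat p *\<^sub>v v) = 0\<^sub>v p"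
  shows "\<exists>i<p. (Kmat p *\<^sub>v v) $ i \<noteq> 0"
proof (rule ccontr)
  assume "\<not> (\<exists>i<p. (Kmat p *\<^sub>v v) $ i \<noteq> 0)"
  hence k0: "(Kmat p *\<^sub>v v) $ i = 0" if "i < p" for i using that by blast
  have vv: "v $ (i + p) = v $ i" if i: "i < p" for i
  proof -
    have "cK * (v $ i - v $ (i + p)) = 0" using k0[OF i] K_mv[OF v, of i] i by simp
    thus ?thesis by simp
  qed
  define t where "t = jmat p *\<^sub>v v"
  have t: "t \<in> carrier_vec (2*p)" unfolding t_def using mult_mat_vec_carrier[OF j_carrier v] .
  have Kt: "Kmat p *\<^sub>v t \<in> carrier_vec (2*p)" using mult_mat_vec_carrier[OF K_carrier t] .
  have Kt_idx: "(Kmat p *\<^sub>v t) $ c = (if c < p then 2 * cK * v $ c else 0)" if c: "c < 2*p" for c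
  proof (cases "c < p")
    case True
    have "(Kmat p *\<^sub>v t) $ c = cK * (t $ c - t $ (c + p))" using K_mv[OF t c] True by simp
    also have "\<dots> = cK * (v $ c + v $ (c + p))" unfolding t_def
      using j_mv[OF v c] j_mv[OF v, of "c+p"] True by simp
    also have "\<dots> = 2 * cK * v $ c" using vv[OF True] by simp
    finally show ?thesis using True by simp
  next
    case False
    have cp: "c - p < p" "c - p < 2*p" "c - p + p = c" using False c by arith+
    have "(Kmat p *\<^sub>v t) $ c = cK * (t $ (c - p) + t $ c)" using K_mv[OF t c] False by simp
    also have "\<dots> = cK * (v $ (c - p) - v $ c)" unfolding t_def
      using j_mv[OF v c] j_mv[OF v cp(2)] False cp(1) by simp
    also have "\<dots> = 0" using vv[OF cp(1)] cp(3) by simp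
    finally show ?thesis using False by simp
  qed
  define a where "a = vec p (\<lambda>c. v $ c)"
  have a: "a \<in> carrier_vec p" unfolding a_def by simp
  have h: "\<forall>r<p. (\<Sum>c\<in>{0..<p}. b $$ (r,c) * a $ c) = 0"
  proof (intro allI impI)
    fix r assume r: "r < p"
    have "b *\<^sub>v (Kmat p *\<^sub>v t) = 0\<^sub>v p" using g assoc_mult_mat_vec[OF b K_carrier t] unfolding t_def by simp
    hence "(b *\<^sub>v (Kmat p *\<^sub>v t)) $ r = 0" using r by simp
    moreover have "(b *\<^sub>v (Kmat p *\<^sub>v t)) $ r = (\<Sum>c\<in>{0..<2*p}. b $$ (r,c) * (Kmat p *\<^sub>v t) $ c)"
      using b r Kt by (simp add: index_mult_mat_vec scalar_prod_def)
    moreover have "(\<Sum>c\<in>{0..<2*p}. b $$ (r,c) * (Kmat p *\<^sub>v t) $ c) = (\<Sum>c\<in>{0..<p}. b $$ (r,c) * (Kmat p *\<^sub>v t) $ c)"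
      by (rule sum.mono_neutral_right) (auto simp: Kt_idx)
    moreover have "(\<Sum>c\<in>{0..<p}. b $$ (r,c) * (Kmat p *\<^sub>v t) $ c) = (2 * cK) * (\<Sum>c\<in>{0..<p}. b $$ (r,c) * a $ c)"
      by (simp add: sum_distrib_left Kt_idx a_def mult_ac)
    ultimately show "(\<Sum>c\<in>{0..<p}. b $$ (r,c) * a $ c) = 0" by simp
  qed
  have "a = 0\<^sub>v p" by (rule beta1_inj[OF b bJ a h])
  hence "v = 0\<^sub>v (2*p)"
  proof -
    assume a0: "a = 0\<^sub>v p"
    have "v $ c = 0" if c: "c < 2*p" for c
    proof (cases "c < p")
      case True
      have "a $ c = 0" using a0 True by simp
      thus ?thesis using True unfolding a_def by simp
    next
      case False
      have cp: "c - p < p" "c - p + p = c" using False c by arith+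
      have "a $ (c - p) = 0" using a0 cp by simp
      thus ?thesis using vv[OF cp(1)] cp unfolding a_def by simp
    qed
    thus ?thesis using v by (intro eq_vecI) auto
  qed
  thus False using v0 by simp
qed


lemma split_sum: fixes f :: "nat \<Rightarrow> 'a::comm_monoid_add"
  shows "(\<Sum>c\<in>{0..<2*p}. f c) = (\<Sum>c\<in>{0..<p}. f c) + (\<Sum>c\<in>{0..<p}. f (c + p))"
proof -
  have "(\<Sum>c\<in>{0..<2*p}. f c) = (\<Sum>c\<in>{0..<p}. f c) + (\<Sum>c\<in>{p..<p+p}. f c)"
    using sum.atLeastLessThan_concat[of 0 p "p+p" f] by (simp add: mult_2)
  also have "(\<Sum>c\<in>{p..<p+p}. f c) = (\<Sum>c\<in>{0..<p}. f (c + p))"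
    using sum.shift_bounds_nat_ivl[of f 0 p p] by simp
  finally show ?thesis .
qed

lemma blk11_eq: "blk11 p A = mat p p (\<lambda>(i,j). A $$ (i,j))"
  unfolding blk11_def split_block_def Let_def by simp

lemma blk12_eq: "blk12 p A = mat p (dim_col A - p) (\<lambda>(i,j). A $$ (i,j+p))"
  unfolding blk12_def split_block_def Let_def by simp

theorem proposition5p5:
  fixes p N :: nat and \<beta> :: "nat \<Rightarrow> complex mat" and R Q :: "complex \<Rightarrow> complex mat"
  assumes "p \<ge> 1"
    and beta_dim: "\<forall>k \<le> N. \<beta> k \<in> carrier_mat p (2 * p)"
    and beta_J: "\<forall>k \<le> N. \<beta> k * Jmat p * mat_adjoint (\<beta> k) = 1\<^sub>m p"
    and RQ_dim: "\<forall>z \<in> lower_half. R z \<in> carrier_mat p p \<and> Q z \<in> carrier_mat p p"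
    and mero: "\<forall>a < p. \<forall>b < p. (\<lambda>z. R z $$ (a, b)) meromorphic_on lower_half
                              \<and> (\<lambda>z. Q z $$ (a, b)) meromorphic_on lower_half"
    and at_mi: "\<forall>a < p. \<forall>b < p. (\<lambda>z. R z $$ (a, b)) analytic_on {- \<i>}
                              \<and> (\<lambda>z. Q z $$ (a, b)) analytic_on {- \<i>}"
    and pos: "\<forall>z \<in> lower_half. (\<forall>a < p. \<forall>b < p. (\<lambda>w. R w $$ (a, b)) analytic_on {z}
                                        \<and> (\<lambda>w. Q w $$ (a, b)) analytic_on {z}) \<longrightarrow>
                 posdef (mat_adjoint (R z) * R z + mat_adjoint (Q z) * Q z)"
    and le: "\<forall>z \<in> lower_half. (\<forall>a < p. \<forall>b < p. (\<lambda>w. R w $$ (a, b)) analytic_on {z}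
                                        \<and> (\<lambda>w. Q w $$ (a, b)) analytic_on {z}) \<longrightarrow>
                 psd (mat_adjoint (Q z) * Q z - mat_adjoint (R z) * R z)"
  shows "det (blk11 p (calW p \<beta> N (- \<i>)) * R (- \<i>) + blk12 p (calW p \<beta> N (- \<i>)) * Q (- \<i>)) \<noteq> 0"
proof -
  define R0 where "R0 = R (- \<i>)"
  define Q0 where "Q0 = Q (- \<i>)"
  have mi: "- \<i> \<in> lower_half" unfolding lower_half_def by simp
  have R0: "R0 \<in> carrier_mat p p" and Q0: "Q0 \<in> carrier_mat p p"
    using RQ_dim mi unfolding R0_def Q0_def by auto
  have PD: "posdef (mat_adjoint R0 * R0 + mat_adjoint Q0 * Q0)"
    using pos mi at_mi unfolding R0_def Q0_def by blast
  have PSD: "psd (mat_adjoint Q0 * Q0 - mat_adjoint R0 * R0)"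
    using le mi at_mi unfolding R0_def Q0_def by blast
  define W where "W = Wmat p \<beta> (Suc N) \<i>"
  have W: "W \<in> carrier_mat (2*p) (2*p)" unfolding W_def by (rule W_carrier[OF beta_dim]) simp
  have aW: "mat_adjoint W \<in> carrier_mat (2*p) (2*p)" using W by simp
  define A where "A = Kmat p * mat_adjoint W"
  have A_eq: "calW p \<beta> N (- \<i>) = A" unfolding calW_def A_def W_def by simp
  have A: "A \<in> carrier_mat (2*p) (2*p)" unfolding A_def using mult_carrier_mat[OF K_carrier aW] .
  define B11 where "B11 = blk11 p A"
  define B12 where "B12 = blk12 p A"
  have B11: "B11 \<in> carrier_mat p p" unfolding B11_def blk11_eq by simp
  have B12: "B12 \<in> carrier_mat p p" unfolding B12_def blk12_eq using A by simp
  define M where "M = B11 * R0 + B12 * Q0"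
  have M: "M \<in> carrier_mat p p" unfolding M_def using B11 B12 R0 Q0 by simp
  have inj: "M *\<^sub>v x \<noteq> 0\<^sub>v p" if x: "x \<in> carrier_vec p" and x0: "x \<noteq> 0\<^sub>v p" for x
  proof
    assume Mx: "M *\<^sub>v x = 0\<^sub>v p"
    define r where "r = R0 *\<^sub>v x"
    define q where "q = Q0 *\<^sub>v x"
    have r: "r \<in> carrier_vec p" unfolding r_def using R0 x by simp
    have q: "q \<in> carrier_vec p" unfolding q_def using Q0 x by simp
    define u where "u = vec (2*p) (\<lambda>i. if i < p then r $ i else q $ (i - p))"
    have u: "u \<in> carrier_vec (2*p)" unfolding u_def by simp
    have ju: "jmat p *\<^sub>v u \<in> carrier_vec (2*p)" using mult_mat_vec_carrier[OF j_carrier u] .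
    have ju_lo: "(jmat p *\<^sub>v u) $ c = r $ c" "u $ c = r $ c" if c: "c < p" for c
      using j_mv[OF u, of c] c by (simp_all add: u_def)
    have ju_hi: "(jmat p *\<^sub>v u) $ (c + p) = - (q $ c)" "u $ (c + p) = q $ c" if c: "c < p" for c
      using j_mv[OF u, of "c + p"] c by (simp_all add: u_def)
    have form_u: "(jmat p *\<^sub>v u) \<bullet>c u = r \<bullet>c r - q \<bullet>c q"
    proof -
      have "(jmat p *\<^sub>v u) \<bullet>c u = (\<Sum>c\<in>{0..<2*p}. (jmat p *\<^sub>v u) $ c * cnj (u $ c))"
        using u by (simp add: scalar_prod_def)
      also have "\<dots> = (\<Sum>c\<in>{0..<p}. (jmat p *\<^sub>v u) $ c * cnj (u $ c)) + (\<Sum>c\<in>{0..<p}. (jmat p *\<^sub>v u) $ (c+p) * cnj (u $ (c+p)))"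
        by (rule split_sum)
      also have "(\<Sum>c\<in>{0..<p}. (jmat p *\<^sub>v u) $ c * cnj (u $ c)) = (\<Sum>c\<in>{0..<p}. r $ c * cnj (r $ c))"
        by (rule sum.cong) (auto simp: ju_lo)
      also have "\<dots> = r \<bullet>c r" using r by (simp add: scalar_prod_def)
      also have "(\<Sum>c\<in>{0..<p}. (jmat p *\<^sub>v u) $ (c+p) * cnj (u $ (c+p))) = (\<Sum>c\<in>{0..<p}. - (q $ c * cnj (q $ c)))"
        by (rule sum.cong) (auto simp: ju_hi)
      also have "\<dots> = - (q \<bullet>c q)" using q by (simp add: scalar_prod_def sum_negf)
      finally show ?thesis by simp
    qed
    have aR: "mat_adjoint R0 \<in> carrier_mat p p" using R0 by simp
    have aQ: "mat_adjoint Q0 \<in> carrier_mat p p" using Q0 by simp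
    have rr: "(mat_adjoint R0 *\<^sub>v r) \<bullet>c x = r \<bullet>c r"
      using adj_inner[OF aR r x] unfolding r_def by simp
    have qq: "(mat_adjoint Q0 *\<^sub>v q) \<bullet>c x = q \<bullet>c q"
      using adj_inner[OF aQ q x] unfolding q_def by simp
    have aRr: "mat_adjoint R0 *\<^sub>v r \<in> carrier_vec p" using mult_mat_vec_carrier[OF aR r] .
    have aQq: "mat_adjoint Q0 *\<^sub>v q \<in> carrier_vec p" using mult_mat_vec_carrier[OF aQ q] .
    have e_minus: "(mat_adjoint Q0 * Q0 - mat_adjoint R0 * R0) *\<^sub>v x = mat_adjoint Q0 *\<^sub>v q - mat_adjoint R0 *\<^sub>v r"
      unfolding q_def r_def
      using minus_mult_distrib_mat_vec[OF mult_carrier_mat[OF aQ Q0] mult_carrier_mat[OF aR R0] x]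
        assoc_mult_mat_vec[OF aQ Q0 x] assoc_mult_mat_vec[OF aR R0 x] by simp
    have e_plus: "(mat_adjoint R0 * R0 + mat_adjoint Q0 * Q0) *\<^sub>v x = mat_adjoint R0 *\<^sub>v r + mat_adjoint Q0 *\<^sub>v q"
      unfolding q_def r_def
      using add_mult_distrib_mat_vec[OF mult_carrier_mat[OF aR R0] mult_carrier_mat[OF aQ Q0] x]
        assoc_mult_mat_vec[OF aQ Q0 x] assoc_mult_mat_vec[OF aR R0 x] by simp
    have "0 \<le> Re (((mat_adjoint Q0 * Q0 - mat_adjoint R0 * R0) *\<^sub>v x) \<bullet>c x)"
      using PSD x Q0 R0 unfolding psd_def by auto
    also have "((mat_adjoint Q0 * Q0 - mat_adjoint R0 * R0) *\<^sub>v x) \<bullet>c x = q \<bullet>c q - r \<bullet>c r"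
      unfolding e_minus cs_minus_left[OF aQq aRr x] rr qq ..
    finally have neg: "Re ((jmat p *\<^sub>v u) \<bullet>c u) \<le> 0" unfolding form_u by simp
    have "0 < Re (((mat_adjoint R0 * R0 + mat_adjoint Q0 * Q0) *\<^sub>v x) \<bullet>c x)"
      using PD x x0 Q0 R0 unfolding posdef_def by auto
    also have "((mat_adjoint R0 * R0 + mat_adjoint Q0 * Q0) *\<^sub>v x) \<bullet>c x = r \<bullet>c r + q \<bullet>c q"
      unfolding e_plus add_scalar_prod_distrib[OF aRr aQq carrier_vec_conjugate[OF x]] rr qq ..
    finally have posrq: "0 < Re (r \<bullet>c r + q \<bullet>c q)" .
    have u0: "u \<noteq> 0\<^sub>v (2*p)"
    proof
      assume uz: "u = 0\<^sub>v (2*p)"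
      have "r = 0\<^sub>v p"
      proof (rule eq_vecI)
        fix i assume "i < dim_vec (0\<^sub>v p :: complex vec)" hence i: "i < p" by simp
        have "u $ i = 0" using uz i by simp
        thus "r $ i = 0\<^sub>v p $ i" using i unfolding u_def by simp
      qed (use r in simp)
      moreover have "q = 0\<^sub>v p"
      proof (rule eq_vecI)
        fix i assume "i < dim_vec (0\<^sub>v p :: complex vec)" hence i: "i < p" by simp
        have "u $ (i + p) = 0" using uz i by simp
        thus "q $ i = 0\<^sub>v p $ i" using i unfolding u_def by simp
      qed (use q in simp)
      ultimately show False using posrq by simp
    qed
    define v where "v = mat_adjoint W *\<^sub>v u"
    have ch: "v \<in> carrier_vec (2*p) \<and> v \<noteq> 0\<^sub>v (2*p) \<and> (\<beta> 0 * Kmat p) *\<^sub>v (jmat p *\<^sub>v v) = 0\<^sub>v p"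
      unfolding v_def W_def using chain[OF beta_dim beta_J order.refl u u0 neg] .
    obtain i where i: "i < p" "(Kmat p *\<^sub>v v) $ i \<noteq> 0"
      using final_step[of "\<beta> 0" p v] beta_dim beta_J ch by auto
    have Av: "A *\<^sub>v u = Kmat p *\<^sub>v v" unfolding A_def v_def using assoc_mult_mat_vec[OF K_carrier aW u] .
    have "(M *\<^sub>v x) $ i = (A *\<^sub>v u) $ i"
    proof -
      have "M *\<^sub>v x = B11 *\<^sub>v r + B12 *\<^sub>v q"
        unfolding M_def r_def q_def
        using add_mult_distrib_mat_vec[OF mult_carrier_mat[OF B11 R0] mult_carrier_mat[OF B12 Q0] x]
          assoc_mult_mat_vec[OF B11 R0 x] assoc_mult_mat_vec[OF B12 Q0 x] by simp
      hence "(M *\<^sub>v x) $ i = (\<Sum>c\<in>{0..<p}. A $$ (i,c) * r $ c) + (\<Sum>c\<in>{0..<p}. A $$ (i,c+p) * q $ c)"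
        using i r q A unfolding B11_def B12_def blk11_eq blk12_eq
        by (simp add: index_mult_mat_vec scalar_prod_def)
      also have "\<dots> = (\<Sum>c\<in>{0..<2*p}. A $$ (i,c) * u $ c)"
        unfolding split_sum[of _ p] by (simp add: u_def)
      also have "\<dots> = (A *\<^sub>v u) $ i"
        using i A u by (simp add: index_mult_mat_vec scalar_prod_def)
      finally show ?thesis .
    qed
    hence "(Kmat p *\<^sub>v v) $ i = 0" using Mx i Av by simp
    thus False using i by simp
  qed
  have "det M \<noteq> 0"
    using det_0_iff_vec_prod_zero[OF M] inj by blast
  thus ?thesis unfolding M_def B11_def B12_def R0_def Q0_def A_eq .
qed

end
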